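(* Let $\alpha>0$ and $\sigma>0$, and let $\pi_{\alpha,\sigma}$, $(c_n)_{n\ge0}$, $\mathbb F_\sigma(\mathbb C)$ and $\mathcal S$ be as in the context. Then for each $f\in L^2(\alpha\mathbb N_0,\pi_{\alpha,\sigma})$ and each $z\in\mathbb C$, $$(\mathcal Sf)(z)=\int_{\alpha\mathbb N_0} f\,d\pi_{\alpha,\sigma+\alpha z}=\exp\Big(-\frac{\sigma+\alpha z}{\alpha^2}\Big)\sum_{n=0}^\infty f(\alpha n)\,\frac{1}{n!}\Big(\frac{\sigma+\alpha z}{\alpha^2}\Big)^n .$$ In particular, for real $z>-\sigma/\alpha$ the integration is with respect to the probability distribution $\pi_{\alpha,\sigma+\alpha z}$. Moreover, the complex-valued series on the right-hand side converges absolutely and uniformly on compact subsets of $\mathbb C$.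
   Context: For $\alpha>0$ and $w\in\mathbb C$, $\pi_{\alpha,w}$ denotes the complex-valued measure on $\alpha\mathbb N_0=\{0,\alpha,2\alpha,\dots\}$ given by $\pi_{\alpha,w}=\exp(-w/\alpha^2)\sum_{n=0}^\infty \frac{1}{n!}(w/\alpha^2)^n\delta_{\alpha n}$, where $\delta_y$ is the Dirac measure at $y$; for $w>0$ this is a probability measure (for $\alpha=1$ the Poisson distribution with parameter $w$). Fix $\sigma>0$. Let $(c_n)_{n\ge0}$ be the monic polynomial sequence orthogonal with respect to $\pi_{\alpha,\sigma}$; its exponential generating function is $\sum_{n\ge0}\frac{t^n}{n!}c_n(z)=\exp\big(\frac z\alpha\log(1+t\alpha)-\frac{\sigma t}{\alpha}\big)$, and $\|c_n\|^2_{L^2(\alpha\mathbb N_0,\pi_{\alpha,\sigma})}=n!\,\sigma^n$. The Bargmann space $\mathbb F_\sigma(\mathbb C)$ is the Hilbert space of entire functions $f(z)=\sum_n f_nz^n$ with $\sum_n|f_n|^2n!\sigma^n<\infty$, with inner product $(f,g)=\sum_n f_n\overline{g_n}\,n!\,\sigma^n$. The generalized Segal--Bargmann transform $\mathcal S:L^2(\alpha\mathbb N_0,\pi_{\alpha,\sigma})\to\mathbb F_\sigma(\mathbb C)$ is the unitary operator with $(\mathcal Sc_n)(z)=z^n$ for all $n\in\mathbb N_0$. *)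

theory Defs
  imports "HOL-Analysis.Analysis" "HOL-Complex_Analysis.Complex_Analysis"
begin

text \<open>Functions on \<alpha>N0 are represented as f :: nat \<Rightarrow> complex with f n standing for f(\<alpha> n).\<close>

text \<open>Weight of the point \<alpha> n under the complex measure \<pi>_{\<alpha>,w}.\<close>
definition pi_weight :: "real \<Rightarrow> complex \<Rightarrow> nat \<Rightarrow> complex" where
  "pi_weight \<alpha> w n = exp (- w / (of_real \<alpha>)\<^sup>2) * (w / (of_real \<alpha>)\<^sup>2) ^ n / of_nat (fact n)"

definition pi_integral :: "real \<Rightarrow> complex \<Rightarrow> (nat \<Rightarrow> complex) \<Rightarrow> complex" where
  "pi_integral \<alpha> w f = (\<Sum>n. f n * pi_weight \<alpha> w n)"

definition L2pi :: "real \<Rightarrow> real \<Rightarrow> (nat \<Rightarrow> complex) \<Rightarrow> bool" where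
  "L2pi \<alpha> \<sigma> f \<longleftrightarrow> summable (\<lambda>n. (cmod (f n))\<^sup>2 * cmod (pi_weight \<alpha> (of_real \<sigma>) n))"

definition L2pi_inner :: "real \<Rightarrow> real \<Rightarrow> (nat \<Rightarrow> complex) \<Rightarrow> (nat \<Rightarrow> complex) \<Rightarrow> complex" where
  "L2pi_inner \<alpha> \<sigma> f g = (\<Sum>n. f n * cnj (g n) * pi_weight \<alpha> (of_real \<sigma>) n)"

text \<open>Monic orthogonal polynomials c_n via their exponential generating function:
  c_n(x) = n-th t-derivative at t=0 of exp(x/\<alpha> log(1+t\<alpha>) - \<sigma> t/\<alpha>).\<close>
definition cpoly :: "real \<Rightarrow> real \<Rightarrow> nat \<Rightarrow> complex \<Rightarrow> complex" where
  "cpoly \<alpha> \<sigma> n x = (deriv ^^ n)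
     (\<lambda>t. exp (x / of_real \<alpha> * Ln (1 + t * of_real \<alpha>) - of_real \<sigma> * t / of_real \<alpha>)) 0"

definition taylor_coeff :: "(complex \<Rightarrow> complex) \<Rightarrow> nat \<Rightarrow> complex" where
  "taylor_coeff F n = (deriv ^^ n) F 0 / of_nat (fact n)"

definition bargmann :: "real \<Rightarrow> (complex \<Rightarrow> complex) \<Rightarrow> bool" where
  "bargmann \<sigma> F \<longleftrightarrow> F holomorphic_on UNIV \<and>
     summable (\<lambda>n. (cmod (taylor_coeff F n))\<^sup>2 * fact n * \<sigma> ^ n)"

definition bargmann_inner :: "real \<Rightarrow> (complex \<Rightarrow> complex) \<Rightarrow> (complex \<Rightarrow> complex) \<Rightarrow> complex" where
  "bargmann_inner \<sigma> F G =
     (\<Sum>n. taylor_coeff F n * cnj (taylor_coeff G n) * of_nat (fact n) * of_real (\<sigma> ^ n))"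

definition is_SB_transform :: "real \<Rightarrow> real \<Rightarrow> ((nat \<Rightarrow> complex) \<Rightarrow> complex \<Rightarrow> complex) \<Rightarrow> bool" where
  "is_SB_transform \<alpha> \<sigma> S \<longleftrightarrow>
     (\<forall>f. L2pi \<alpha> \<sigma> f \<longrightarrow> bargmann \<sigma> (S f)) \<and>
     (\<forall>f g a b. L2pi \<alpha> \<sigma> f \<longrightarrow> L2pi \<alpha> \<sigma> g \<longrightarrow>
        S (\<lambda>k. a * f k + b * g k) = (\<lambda>z. a * S f z + b * S g z)) \<and>
     (\<forall>f g. L2pi \<alpha> \<sigma> f \<longrightarrow> L2pi \<alpha> \<sigma> g \<longrightarrow>
        bargmann_inner \<sigma> (S f) (S g) = L2pi_inner \<alpha> \<sigma> f g) \<and>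
     (\<forall>F. bargmann \<sigma> F \<longrightarrow> (\<exists>f. L2pi \<alpha> \<sigma> f \<and> S f = F)) \<and>
     (\<forall>n. S (\<lambda>k. cpoly \<alpha> \<sigma> n (of_real (\<alpha> * real k))) = (\<lambda>z. z ^ n))"

end

theory Submission
  imports Defs
begin

lemma pw_real:
  "pi_weight \<alpha> (of_real s) k = of_real (exp (- s / \<alpha>\<^sup>2) * (s / \<alpha>\<^sup>2) ^ k / fact k)"
  by (simp add: pi_weight_def exp_of_real[symmetric])

lemma summable_exp':
  fixes x :: "'a::{real_normed_field,banach}"
  shows "summable (\<lambda>n. x ^ n / fact n)"
  using summable_exp[of x] by (simp add: divide_inverse mult.commute)

lemma amgm: fixes x y t :: real assumes "t > 0" shows "x * y \<le> (x\<^sup>2 * t + y\<^sup>2 / t) / 2"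
proof -
  have "0 \<le> (x * t - y)\<^sup>2 / t" using assms by simp
  also have "(x * t - y)\<^sup>2 / t = x\<^sup>2 * t + y\<^sup>2 / t - 2 * x * y" using assms
    by (simp add: power2_eq_square field_simps)
  finally show ?thesis by simp
qed

lemma L2_sumQ:
  assumes a: "\<alpha> > 0" and s: "\<sigma> > 0" and f: "L2pi \<alpha> \<sigma> f" and Q: "Q \<ge> 0"
  shows "summable (\<lambda>n. norm (f n) * Q ^ n / fact n)"
proof -
  define c where "c = \<sigma> / \<alpha>\<^sup>2"
  have c: "c > 0" using a s by (simp add: c_def)
  define t where "t n = exp (- c) * c ^ n / fact n" for n
  have t: "t n > 0" for n using c by (simp add: t_def)
  have cm: "cmod (pi_weight \<alpha> (of_real \<sigma>) n) = t n" for n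
    unfolding pw_real norm_of_real using a s by (simp add: t_def c_def abs_mult power_abs)
  have s1: "summable (\<lambda>n. (norm (f n))\<^sup>2 * t n)" using f by (simp add: L2pi_def cm)
  have e: "(Q ^ n / fact n)\<^sup>2 / t n = exp c * ((Q\<^sup>2 / c) ^ n / fact n)" for n
    using c by (simp add: t_def field_simps power2_eq_square power_mult_distrib exp_minus)
  have s2: "summable (\<lambda>n. (Q ^ n / fact n)\<^sup>2 / t n)"
    unfolding e by (intro summable_mult summable_exp')
  have "summable (\<lambda>n. ((norm (f n))\<^sup>2 * t n + (Q ^ n / fact n)\<^sup>2 / t n) / 2)"
    by (intro summable_divide summable_add s1 s2)
  then show ?thesis
  proof (rule summable_comparison_test')
    fix n
    have "norm (f n) * (Q ^ n / fact n) \<le> ((norm (f n))\<^sup>2 * t n + (Q ^ n / fact n)\<^sup>2 / t n) / 2"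
      by (rule amgm[OF t])
    then show "norm (norm (f n) * Q ^ n / fact n) \<le> ((norm (f n))\<^sup>2 * t n + (Q ^ n / fact n)\<^sup>2 / t n) / 2"
      using Q by simp
  qed
qed

definition Gk :: "real \<Rightarrow> real \<Rightarrow> nat \<Rightarrow> complex \<Rightarrow> complex" where
  "Gk \<alpha> \<sigma> k t = (1 + t * of_real \<alpha>) ^ k * exp (- (of_real \<sigma> * t / of_real \<alpha>))"

lemma Gk_holo: "\<alpha> > 0 \<Longrightarrow> Gk \<alpha> \<sigma> k holomorphic_on A"
  unfolding Gk_def by (intro holomorphic_intros) auto

lemma cpoly_Gk:
  assumes a: "\<alpha> > 0"
  shows "cpoly \<alpha> \<sigma> n (of_real (\<alpha> * real k)) = (deriv ^^ n) (Gk \<alpha> \<sigma> k) 0"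
  unfolding cpoly_def
proof (rule higher_deriv_cong_ev)
  show "\<forall>\<^sub>F t in nhds 0. exp (of_real (\<alpha> * real k) / of_real \<alpha> * Ln (1 + t * of_real \<alpha>) - of_real \<sigma> * t / of_real \<alpha>) = Gk \<alpha> \<sigma> k t"
    unfolding eventually_nhds
  proof (intro exI conjI ballI)
    show "open (ball (0::complex) (1/\<alpha>))" by simp
    show "(0::complex) \<in> ball 0 (1/\<alpha>)" using a by simp
    fix t :: complex assume "t \<in> ball 0 (1/\<alpha>)"
    then have "norm t * \<alpha> < 1" using a by (simp add: field_simps)
    then have nz: "1 + t * of_real \<alpha> \<noteq> 0"
      using a by (metis add_eq_0_iff norm_minus_cancel norm_mult norm_of_real norm_one abs_of_pos less_irrefl)
    have e: "of_real (\<alpha> * real k) / of_real \<alpha> = (of_nat k :: complex)" using a by simp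
    show "exp (of_real (\<alpha> * real k) / of_real \<alpha> * Ln (1 + t * of_real \<alpha>) - of_real \<sigma> * t / of_real \<alpha>) = Gk \<alpha> \<sigma> k t"
      unfolding e Gk_def diff_conv_add_uminus exp_add exp_of_nat_mult exp_Ln[OF nz] ..
  qed
qed simp

lemma Gk_sums:
  assumes a: "\<alpha> > 0"
  shows "(\<lambda>n. (deriv ^^ n) (Gk \<alpha> \<sigma> k) 0 / fact n * w ^ n) sums Gk \<alpha> \<sigma> k w"
  using holomorphic_power_series[OF Gk_holo[OF a], where z=0 and r="norm w + 1" and w=w] by simp

lemma Gk_cnj: "cnj (Gk \<alpha> \<sigma> k (cnj w)) = Gk \<alpha> \<sigma> k w"
  by (simp add: Gk_def exp_cnj)

lemma Gk_sums_cnj: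
  assumes a: "\<alpha> > 0"
  shows "(\<lambda>n. cnj ((deriv ^^ n) (Gk \<alpha> \<sigma> k) 0) / fact n * w ^ n) sums Gk \<alpha> \<sigma> k w"
proof -
  have "(\<lambda>n. cnj ((deriv ^^ n) (Gk \<alpha> \<sigma> k) 0 / fact n * (cnj w) ^ n)) sums cnj (Gk \<alpha> \<sigma> k (cnj w))"
    using Gk_sums[OF a, of \<sigma> k "cnj w"] by (simp only: sums_cnj)
  then show ?thesis by (simp add: Gk_cnj)
qed

lemma Gk_norm:
  assumes a: "\<alpha> > 0" and s: "\<sigma> \<ge> 0" and w: "norm w \<le> r"
  shows "norm (Gk \<alpha> \<sigma> k w) \<le> (1 + \<alpha> * r) ^ k * exp (\<sigma> * r / \<alpha>)"
proof -
  have "norm (1 + w * of_real \<alpha>) \<le> 1 + \<alpha> * r"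
  proof -
    have "norm (1 + w * of_real \<alpha>) \<le> norm (1::complex) + norm (w * of_real \<alpha>)" by (rule norm_triangle_ineq)
    also have "\<dots> = 1 + \<alpha> * norm w" using a by (simp add: norm_mult)
    also have "\<dots> \<le> 1 + \<alpha> * r" using a w by simp
    finally show ?thesis .
  qed
  then have 1: "norm ((1 + w * of_real \<alpha>) ^ k) \<le> (1 + \<alpha> * r) ^ k"
    by (simp add: norm_power power_mono)
  have "Re (- (of_real \<sigma> * w / of_real \<alpha>)) = - \<sigma> * Re w / \<alpha>" by simp
  also have "\<dots> \<le> \<sigma> * norm w / \<alpha>"
  proof -
    have "- Re w \<le> norm w" using abs_Re_le_cmod[of w] by linarith
    then have sw: "\<sigma> * (- Re w) \<le> \<sigma> * norm w" using s by (rule mult_left_mono)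
    show ?thesis using divide_right_mono[OF sw, of \<alpha>] a by simp
  qed
  also have "\<dots> \<le> \<sigma> * r / \<alpha>" using a s w by (simp add: divide_right_mono mult_left_mono)
  finally have 2: "norm (exp (- (of_real \<sigma> * w / of_real \<alpha>))) \<le> exp (\<sigma> * r / \<alpha>)"
    by (simp add: norm_exp_eq_Re)
  show ?thesis unfolding Gk_def norm_mult
  proof (rule mult_mono[OF 1 2])
    have "0 \<le> r" using w norm_ge_zero[of w] by linarith
    then show "0 \<le> (1 + \<alpha> * r) ^ k" using a by (intro zero_le_power) simp
  qed simp
qed

lemma Gk_bound:
  assumes a: "\<alpha> > 0" and s: "\<sigma> \<ge> 0" and r: "r > 0"
  shows "norm ((deriv ^^ n) (Gk \<alpha> \<sigma> k) 0) \<le> fact n * (2 * ((1 + \<alpha> * r) ^ k * exp (\<sigma> * r / \<alpha>))) / r ^ n"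
proof -
  define M where "M = (1 + \<alpha> * r) ^ k * exp (\<sigma> * r / \<alpha>)"
  have "(1::real) \<le> (1 + \<alpha> * r) ^ k" using a r by (intro one_le_power) simp
  moreover have "(1::real) \<le> exp (\<sigma> * r / \<alpha>)" using a r s by simp
  ultimately have M1: "M \<ge> 1" unfolding M_def
    using mult_mono[of 1 "(1 + \<alpha> * r) ^ k" 1 "exp (\<sigma> * r / \<alpha>)"] by simp
  show ?thesis
  proof (cases "n = 0")
    case True
    then show ?thesis using M1 by (simp add: M_def[symmetric] Gk_def)
  next
    case False
    have "cmod ((deriv ^^ n) (Gk \<alpha> \<sigma> k) 0) \<le> fact n * (2 * M) / r ^ n"
    proof (rule Cauchy_higher_deriv_bound[where y = 0])
      show "Gk \<alpha> \<sigma> k holomorphic_on ball 0 r" by (rule Gk_holo[OF a])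
      show "continuous_on (cball 0 r) (Gk \<alpha> \<sigma> k)"
        by (rule holomorphic_on_imp_continuous_on, rule Gk_holo[OF a])
      fix w :: complex assume "w \<in> ball 0 r"
      then have "norm w \<le> r" by simp
      from Gk_norm[OF a s this, of k] M1 show "Gk \<alpha> \<sigma> k w \<in> ball 0 (2 * M)"
        by (simp add: M_def)
    qed (use r False in auto)
    then show ?thesis by (simp add: M_def)
  qed
qed

lemma taylor_coeff_pow: "taylor_coeff (\<lambda>z. z ^ n) m = (if m = n then 1 else 0)"
proof -
  have "(deriv ^^ m) (\<lambda>z::complex. z ^ n) 0 = pochhammer (of_nat (Suc n - m)) m * (0 - 0) ^ (n - m)"
    using higher_deriv_power[of m 0 n 0] by simp
  moreover have "pochhammer (of_nat (Suc n - m)) m * (0 - 0) ^ (n - m) = (if m = n then fact n else (0::complex))"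
  proof (cases "m < n")
    case True then show ?thesis by simp
  next
    case False
    show ?thesis
    proof (cases "m = n")
      case True then show ?thesis by (simp add: pochhammer_fact)
    next
      case False
      with \<open>\<not> m < n\<close> have "Suc n - m = 0" "m > 0" by auto
      then show ?thesis using False by (simp add: pochhammer_0_left)
    qed
  qed
  ultimately show ?thesis by (simp add: taylor_coeff_def)
qed

lemma bargmann_inner_pow:
  "bargmann_inner \<sigma> F (\<lambda>z. z ^ n) = taylor_coeff F n * of_nat (fact n) * of_real (\<sigma> ^ n)"
proof -
  have "(\<lambda>m. taylor_coeff F m * cnj (taylor_coeff (\<lambda>z. z ^ n) m) * of_nat (fact m) * of_real (\<sigma> ^ m))
      = (\<lambda>m. if m = n then taylor_coeff F n * of_nat (fact n) * of_real (\<sigma> ^ n) else 0)"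
    by (auto simp: taylor_coeff_pow)
  then show ?thesis unfolding bargmann_inner_def using sums_single[of n "\<lambda>_. taylor_coeff F n * of_nat (fact n) * of_real (\<sigma> ^ n)"]
    by (simp add: sums_iff)
qed

lemma L2_cpoly:
  assumes a: "\<alpha> > 0" and s: "\<sigma> > 0"
  shows "L2pi \<alpha> \<sigma> (\<lambda>k. cpoly \<alpha> \<sigma> n (of_real (\<alpha> * real k)))"
proof -
  define c where "c = \<sigma> / \<alpha>\<^sup>2"
  have c: "c > 0" using a s by (simp add: c_def)
  define t where "t k = exp (- c) * c ^ k / fact k" for k
  have t: "t k > 0" for k using c by (simp add: t_def)
  have cm: "cmod (pi_weight \<alpha> (of_real \<sigma>) k) = t k" for k
    unfolding pw_real norm_of_real using a s by (simp add: t_def c_def abs_mult power_abs)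
  define A where "A = fact n * 2 * exp (\<sigma> / \<alpha>)"
  have A: "A \<ge> 0" by (simp add: A_def)
  have g: "norm (cpoly \<alpha> \<sigma> n (of_real (\<alpha> * real k))) \<le> A * (1 + \<alpha>) ^ k" for k
    unfolding cpoly_Gk[OF a] using Gk_bound[OF a _ zero_less_one, of \<sigma> n k] s by (simp add: A_def mult_ac)
  have "summable (\<lambda>k. A\<^sup>2 * exp (- c) * (((1 + \<alpha>)\<^sup>2 * c) ^ k / fact k))"
    by (intro summable_mult summable_exp')
  then show ?thesis unfolding L2pi_def cm
  proof (rule summable_comparison_test')
    fix k
    have "(norm (cpoly \<alpha> \<sigma> n (of_real (\<alpha> * real k))))\<^sup>2 \<le> (A * (1 + \<alpha>) ^ k)\<^sup>2"
      by (rule power_mono[OF g]) simp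
    then have "(norm (cpoly \<alpha> \<sigma> n (of_real (\<alpha> * real k))))\<^sup>2 * t k \<le> (A * (1 + \<alpha>) ^ k)\<^sup>2 * t k"
      using t[of k] by (intro mult_right_mono) simp_all
    also have "\<dots> = A\<^sup>2 * exp (- c) * (((1 + \<alpha>)\<^sup>2 * c) ^ k / fact k)"
    proof -
      have eq: "((1 + \<alpha>)\<^sup>2 * c) ^ k = ((1 + \<alpha>) ^ k)\<^sup>2 * c ^ k"
        by (simp add: power_mult_distrib power_mult[symmetric] mult.commute)
      show ?thesis unfolding eq by (simp add: t_def power_mult_distrib mult_ac)
    qed
    finally show "norm ((norm (cpoly \<alpha> \<sigma> n (of_real (\<alpha> * real k))))\<^sup>2 * t k) \<le> A\<^sup>2 * exp (- c) * (((1 + \<alpha>)\<^sup>2 * c) ^ k / fact k)"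
      using t[of k] by simp
  qed
qed

lemma pw_shift:
  assumes a: "\<alpha> > 0" and s: "\<sigma> > 0"
  shows "pi_weight \<alpha> (of_real \<sigma>) k * Gk \<alpha> \<sigma> k (z / of_real \<sigma>) = pi_weight \<alpha> (of_real \<sigma> + of_real \<alpha> * z) k"
proof -
  have an: "(of_real \<alpha> :: complex) \<noteq> 0" and sn: "(of_real \<sigma> :: complex) \<noteq> 0" using a s by auto
  have e1: "(of_real \<sigma> / (of_real \<alpha>)\<^sup>2) * (1 + z / of_real \<sigma> * of_real \<alpha>) = (of_real \<sigma> + of_real \<alpha> * z) / (of_real \<alpha>)\<^sup>2"
    using an sn by (simp add: field_simps power2_eq_square)
  have e2: "- of_real \<sigma> / (of_real \<alpha>)\<^sup>2 + - (of_real \<sigma> * (z / of_real \<sigma>) / of_real \<alpha>) = - (of_real \<sigma> + of_real \<alpha> * z) / (of_real \<alpha>)\<^sup>2"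
    using an sn by (simp add: field_simps power2_eq_square)
  have "pi_weight \<alpha> (of_real \<sigma>) k * Gk \<alpha> \<sigma> k (z / of_real \<sigma>)
     = exp (- of_real \<sigma> / (of_real \<alpha>)\<^sup>2) * exp (- (of_real \<sigma> * (z / of_real \<sigma>) / of_real \<alpha>))
       * ((of_real \<sigma> / (of_real \<alpha>)\<^sup>2) * (1 + z / of_real \<sigma> * of_real \<alpha>)) ^ k / of_nat (fact k)"
    unfolding pi_weight_def Gk_def power_mult_distrib by (simp add: mult_ac)
  also have "\<dots> = pi_weight \<alpha> (of_real \<sigma> + of_real \<alpha> * z) k"
    unfolding e1 exp_add[symmetric] e2 pi_weight_def ..
  finally show ?thesis .
qed

lemma rows_sums:
  fixes T :: "nat \<Rightarrow> nat \<Rightarrow> 'a::banach"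
  assumes S: "(\<lambda>(n,k). T n k) summable_on UNIV" and R: "\<And>n. T n sums R n"
    and r: "\<And>n. T n summable_on UNIV"
  shows "R sums infsum (\<lambda>n. infsum (T n) UNIV) UNIV"
proof -
  have S': "(\<lambda>(n,k). T n k) summable_on Sigma UNIV (\<lambda>_. UNIV)" using S by simp
  have ri: "infsum (T n) UNIV = R n" for n
    by (rule sums_unique2[OF has_sum_imp_sums[OF has_sum_infsum[OF r]] R])
  have "(\<lambda>n. infsum (\<lambda>k. (\<lambda>(n,k). T n k) (n,k)) UNIV) summable_on UNIV"
    using summable_on_SigmaD[OF S'] r by simp
  hence "R summable_on UNIV" using ri by simp
  then have "R sums infsum R UNIV" by (rule has_sum_imp_sums[OF has_sum_infsum])
  then show ?thesis using ri by simp
qed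

lemma fubini_nat:
  fixes T :: "nat \<Rightarrow> nat \<Rightarrow> 'a::banach"
  assumes S: "(\<lambda>(n,k). T n k) summable_on UNIV" and R: "\<And>n. T n sums R n"
    and C: "\<And>k. (\<lambda>n. T n k) sums C k"
    and r: "\<And>n. T n summable_on UNIV" and c: "\<And>k. (\<lambda>n. T n k) summable_on UNIV"
  shows "suminf R = suminf C"
proof -
  have S2: "(\<lambda>(k,n). T n k) summable_on UNIV"
    using S summable_on_swap[of "\<lambda>(n,k). T n k" UNIV UNIV] by (simp add: case_prod_unfold)
  have "suminf R = infsum (\<lambda>n. infsum (T n) UNIV) UNIV" using rows_sums[OF S R r] by (simp add: sums_iff)
  also have "\<dots> = infsum (\<lambda>k. infsum (\<lambda>n. T n k) UNIV) UNIV"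
    by (rule infsum_swap_banach) (use S in simp)
  also have "\<dots> = suminf C" using rows_sums[of "\<lambda>k n. T n k", OF S2 C c] by (simp add: sums_iff)
  finally show ?thesis .
qed

lemma main_eval:
  assumes a: "\<alpha> > 0" and s: "\<sigma> > 0" and SB: "is_SB_transform \<alpha> \<sigma> S" and f: "L2pi \<alpha> \<sigma> f"
  shows "S f z = pi_integral \<alpha> (of_real \<sigma> + of_real \<alpha> * z) f"
proof -
  define F where "F = S f"
  have holo: "F holomorphic_on UNIV" using SB f by (simp add: is_SB_transform_def bargmann_def F_def)
  have Fsum: "(\<lambda>n. taylor_coeff F n * z ^ n) sums F z"
    using holomorphic_power_series[OF holomorphic_on_subset[OF holo subset_UNIV], where z=0 and r="norm z + 1" and w=z]
    by (simp add: taylor_coeff_def)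
  define g where "g n k = cpoly \<alpha> \<sigma> n (of_real (\<alpha> * real k))" for n k
  define p where "p k = pi_weight \<alpha> (of_real \<sigma>) k" for k
  define D where "D n k = (deriv ^^ n) (Gk \<alpha> \<sigma> k) 0" for n k
  have gD: "g n k = D n k" for n k unfolding g_def D_def cpoly_Gk[OF a] ..
  have L2g: "L2pi \<alpha> \<sigma> (g n)" for n using L2_cpoly[OF a s] unfolding g_def .
  have Sg: "S (g n) = (\<lambda>z. z ^ n)" for n using SB unfolding is_SB_transform_def g_def by blast
  define L where "L n = (\<Sum>k. f k * cnj (g n k) * p k)" for n
  have inner: "taylor_coeff F n * of_nat (fact n) * of_real (\<sigma> ^ n) = L n" for n
  proof -
    have "bargmann_inner \<sigma> (S f) (S (g n)) = L2pi_inner \<alpha> \<sigma> f (g n)"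
      using SB f L2g unfolding is_SB_transform_def by blast
    then show ?thesis unfolding Sg bargmann_inner_pow L2pi_inner_def L_def p_def F_def .
  qed
  define c where "c = \<sigma> / \<alpha>\<^sup>2"
  have c: "c > 0" using a s by (simp add: c_def)
  define t where "t k = exp (- c) * c ^ k / fact k" for k
  have t: "t k > 0" for k using c by (simp add: t_def)
  have cm: "cmod (p k) = t k" for k
    unfolding p_def pw_real norm_of_real using a s by (simp add: t_def c_def abs_mult power_abs)
  have fL2: "summable (\<lambda>k. (norm (f k))\<^sup>2 * t k)" using f by (simp add: L2pi_def cm[unfolded p_def])
  have gL2: "summable (\<lambda>k. (norm (g n k))\<^sup>2 * t k)" for n using L2g[of n] by (simp add: L2pi_def cm[unfolded p_def])
  have Lsum: "summable (\<lambda>k. f k * cnj (g n k) * p k)" for n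
  proof (rule summable_norm_cancel)
    have "summable (\<lambda>k. ((norm (f k))\<^sup>2 * t k + (norm (g n k))\<^sup>2 * t k) / 2)"
      by (intro summable_divide summable_add fL2 gL2)
    then show "summable (\<lambda>k. norm (f k * cnj (g n k) * p k))"
    proof (rule summable_comparison_test')
      fix k
      have "norm (f k) * norm (g n k) \<le> ((norm (f k))\<^sup>2 + (norm (g n k))\<^sup>2) / 2"
        using amgm[OF zero_less_one, of "norm (f k)" "norm (g n k)"] by simp
      then have "norm (f k) * norm (g n k) * t k \<le> ((norm (f k))\<^sup>2 + (norm (g n k))\<^sup>2) / 2 * t k"
        using t[of k] by (intro mult_right_mono) simp_all
      then show "norm (norm (f k * cnj (g n k) * p k)) \<le> ((norm (f k))\<^sup>2 * t k + (norm (g n k))\<^sup>2 * t k) / 2"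
        using t[of k] by (simp add: norm_mult cm field_simps abs_mult)
    qed
  qed
  define T where "T n k = (z / of_real \<sigma>) ^ n / of_nat (fact n) * (f k * cnj (g n k) * p k)" for n k
  define R where "R n = taylor_coeff F n * z ^ n" for n
  define C where "C k = f k * pi_weight \<alpha> (of_real \<sigma> + of_real \<alpha> * z) k" for k
  have Rs: "T n sums R n" for n
  proof -
    have "T n sums ((z / of_real \<sigma>) ^ n / of_nat (fact n) * L n)"
      unfolding T_def L_def by (intro sums_mult summable_sums Lsum)
    moreover have "(z / of_real \<sigma>) ^ n / of_nat (fact n) * L n = R n"
      unfolding inner[symmetric] R_def using s by (simp add: power_divide field_simps)
    ultimately show ?thesis by simp
  qed
  have Cs: "(\<lambda>n. T n k) sums C k" for k
  proof -
    have "(\<lambda>n. (f k * p k) * (cnj (D n k) / fact n * (z / of_real \<sigma>) ^ n)) sums ((f k * p k) * Gk \<alpha> \<sigma> k (z / of_real \<sigma>))"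
      unfolding D_def by (intro sums_mult Gk_sums_cnj a)
    moreover have "(\<lambda>n. (f k * p k) * (cnj (D n k) / fact n * (z / of_real \<sigma>) ^ n)) = (\<lambda>n. T n k)"
      by (auto simp: T_def gD)
    moreover have "(f k * p k) * Gk \<alpha> \<sigma> k (z / of_real \<sigma>) = C k"
      unfolding C_def p_def mult.assoc pw_shift[OF a s] ..
    ultimately show ?thesis by simp
  qed
  define r where "r = 2 * norm z / \<sigma> + 1"
  have r: "r > 0" using s by (simp add: r_def add_nonneg_pos)
  define \<rho> where "\<rho> = (norm z / \<sigma>) / r"
  have \<rho>0: "\<rho> \<ge> 0" using r s by (simp add: \<rho>_def)
  have \<rho>1: "\<rho> < 1" using r s by (simp add: \<rho>_def r_def field_simps)
  define e where "e = exp (\<sigma> * r / \<alpha>)"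
  define b where "b k = 2 * e * (norm (f k) * (1 + \<alpha> * r) ^ k * t k)" for k
  have b0: "b k \<ge> 0" for k using t[of k] a r by (simp add: b_def e_def)
  have bs: "summable b"
  proof -
    have "summable (\<lambda>k. 2 * e * exp (- c) * (norm (f k) * (c * (1 + \<alpha> * r)) ^ k / fact k))"
      by (intro summable_mult L2_sumQ[OF a s f]) (use c a r in simp)
    moreover have "(\<lambda>k. 2 * e * exp (- c) * (norm (f k) * (c * (1 + \<alpha> * r)) ^ k / fact k)) = b"
      by (auto simp: b_def t_def power_mult_distrib)
    ultimately show ?thesis by simp
  qed
  have normT: "norm (T n k) \<le> \<rho> ^ n * b k" for n k
  proof -
    have Db: "norm (D n k) \<le> fact n * (2 * ((1 + \<alpha> * r) ^ k * e)) / r ^ n"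
      unfolding D_def e_def using Gk_bound[OF a _ r, of \<sigma> n k] s by simp
    have "norm (T n k) = (norm z / \<sigma>) ^ n / fact n * (norm (f k) * t k) * norm (D n k)"
      using s by (simp add: T_def norm_mult norm_divide norm_power cm gD)
    also have "\<dots> \<le> (norm z / \<sigma>) ^ n / fact n * (norm (f k) * t k) * (fact n * (2 * ((1 + \<alpha> * r) ^ k * e)) / r ^ n)"
      using t[of k] s by (intro mult_left_mono Db) simp_all
    also have "\<dots> = \<rho> ^ n * b k"
      using r by (simp add: \<rho>_def b_def power_divide field_simps)
    finally show ?thesis .
  qed
  have geo: "summable (\<lambda>n. \<rho> ^ n)" using \<rho>0 \<rho>1 by (intro summable_geometric) simp
  have rows: "T n summable_on UNIV" for n
  proof (rule norm_summable_imp_summable_on, rule summable_comparison_test')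
    show "summable (\<lambda>k. \<rho> ^ n * b k)" by (intro summable_mult bs)
  qed (use normT in simp)
  have cols: "(\<lambda>n. T n k) summable_on UNIV" for k
  proof (rule norm_summable_imp_summable_on, rule summable_comparison_test')
    show "summable (\<lambda>n. \<rho> ^ n * b k)" by (intro summable_mult2 geo)
  qed (use normT in simp)
  have Bsum: "(\<lambda>(n,k). \<rho> ^ n * b k) summable_on Sigma UNIV (\<lambda>_. UNIV)"
  proof (rule summable_on_SigmaI[where g = "\<lambda>n. \<rho> ^ n * suminf b"])
    fix n :: nat
    show "((\<lambda>k. case (n, k) of (n, k) \<Rightarrow> \<rho> ^ n * b k) has_sum \<rho> ^ n * suminf b) UNIV"
    proof -
      have "((\<lambda>k. \<rho> ^ n * b k) has_sum \<rho> ^ n * suminf b) UNIV"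
      proof (rule norm_summable_imp_has_sum)
        show "summable (\<lambda>k. norm (\<rho> ^ n * b k))" using \<rho>0 b0 bs by (simp add: abs_of_nonneg summable_mult)
        show "(\<lambda>k. \<rho> ^ n * b k) sums (\<rho> ^ n * suminf b)" by (intro sums_mult summable_sums bs)
      qed
      then show ?thesis by simp
    qed
  next
    show "(\<lambda>n. \<rho> ^ n * suminf b) summable_on UNIV"
    proof (rule norm_summable_imp_summable_on)
      have "suminf b \<ge> 0" using b0 bs by (simp add: suminf_nonneg)
      then show "summable (\<lambda>n. norm (\<rho> ^ n * suminf b))" using \<rho>0 geo by (simp add: abs_of_nonneg summable_mult2)
    qed
  next
    fix n k show "0 \<le> (case (n, k) of (n, k) \<Rightarrow> \<rho> ^ n * b k)" using \<rho>0 b0 by simp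
  qed
  have Tsum: "(\<lambda>(n,k). T n k) summable_on UNIV"
  proof -
    have "(\<lambda>x. norm ((\<lambda>(n,k). T n k) x)) summable_on UNIV"
    proof (rule Infinite_Sum.abs_summable_on_comparison_test'[where f="\<lambda>(n,k). T n k" and g="\<lambda>(n,k). \<rho> ^ n * b k"])
      show "(\<lambda>(n,k). \<rho> ^ n * b k) summable_on UNIV" using Bsum by simp
    qed (use normT in auto)
    then show ?thesis by (rule Infinite_Sum.abs_summable_summable)
  qed
  have "S f z = suminf R" using Fsum unfolding R_def[abs_def] F_def by (simp add: sums_iff)
  also have "\<dots> = suminf C" by (rule fubini_nat[OF Tsum Rs Cs rows cols])
  also have "\<dots> = pi_integral \<alpha> (of_real \<sigma> + of_real \<alpha> * z) f" unfolding C_def[abs_def] pi_integral_def ..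
  finally show ?thesis .
qed

lemma part_sumQ:
  assumes a: "\<alpha> > 0" and s: "\<sigma> > 0" and f: "L2pi \<alpha> \<sigma> f" and Q: "norm q \<le> Q"
  shows "summable (\<lambda>n. norm (f n * q ^ n / of_nat (fact n)))"
proof (rule summable_comparison_test')
  show "summable (\<lambda>n. norm (f n) * Q ^ n / fact n)"
    using L2_sumQ[OF a s f, of Q] Q norm_ge_zero[of q] by linarith
next
  fix n
  have "norm (f n) * norm q ^ n / fact n \<le> norm (f n) * Q ^ n / fact n"
    by (intro divide_right_mono mult_left_mono power_mono Q) simp_all
  then show "norm (norm (f n * q ^ n / of_nat (fact n))) \<le> norm (f n) * Q ^ n / fact n"
    by (simp add: norm_mult norm_divide norm_power)
qed

lemma q_bound:
  fixes z :: complex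
  assumes a: "\<alpha> > 0" and s: "\<sigma> > 0" and z: "norm z \<le> B"
  shows "norm ((of_real \<sigma> + of_real \<alpha> * z) / (of_real \<alpha>)\<^sup>2) \<le> (\<sigma> + \<alpha> * B) / \<alpha>\<^sup>2"
proof -
  have "norm (of_real \<sigma> + of_real \<alpha> * z) \<le> norm (of_real \<sigma> :: complex) + norm (of_real \<alpha> * z)"
    by (rule norm_triangle_ineq)
  also have "\<dots> \<le> \<sigma> + \<alpha> * B" using a s z by (simp add: norm_mult)
  finally show ?thesis using a by (simp add: norm_divide norm_power divide_right_mono)
qed

theorem theorem4p2:
  fixes \<alpha> \<sigma> :: real and S :: "(nat \<Rightarrow> complex) \<Rightarrow> complex \<Rightarrow> complex"
  assumes "\<alpha> > 0" and "\<sigma> > 0" and "is_SB_transform \<alpha> \<sigma> S"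
  shows "(\<forall>f z. L2pi \<alpha> \<sigma> f \<longrightarrow>
            S f z = pi_integral \<alpha> (of_real \<sigma> + of_real \<alpha> * z) f \<and>
            pi_integral \<alpha> (of_real \<sigma> + of_real \<alpha> * z) f =
              exp (- (of_real \<sigma> + of_real \<alpha> * z) / (of_real \<alpha>)\<^sup>2) *
              (\<Sum>n. f n * ((of_real \<sigma> + of_real \<alpha> * z) / (of_real \<alpha>)\<^sup>2) ^ n / of_nat (fact n)))
       \<and> (\<forall>x::real. x > - \<sigma> / \<alpha> \<longrightarrow>
            (\<forall>n. pi_weight \<alpha> (of_real (\<sigma> + \<alpha> * x)) n \<in> \<real> \<and>
                 Re (pi_weight \<alpha> (of_real (\<sigma> + \<alpha> * x)) n) \<ge> 0) \<and>
            (\<Sum>n. pi_weight \<alpha> (of_real (\<sigma> + \<alpha> * x)) n) = 1)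
       \<and> (\<forall>f. L2pi \<alpha> \<sigma> f \<longrightarrow>
            (\<forall>z. summable (\<lambda>n. norm (f n * ((of_real \<sigma> + of_real \<alpha> * z) / (of_real \<alpha>)\<^sup>2) ^ n / of_nat (fact n)))) \<and>
            (\<forall>K. compact K \<longrightarrow>
               uniformly_convergent_on K
                 (\<lambda>N z. \<Sum>n<N. f n * ((of_real \<sigma> + of_real \<alpha> * z) / (of_real \<alpha>)\<^sup>2) ^ n / of_nat (fact n)) \<and>
               uniformly_convergent_on K
                 (\<lambda>N z. \<Sum>n<N. norm (f n * ((of_real \<sigma> + of_real \<alpha> * z) / (of_real \<alpha>)\<^sup>2) ^ n / of_nat (fact n)))))"
proof (intro conjI allI impI)
  note a = assms(1) and s = assms(2) and SB = assms(3)
  fix f z assume f: "L2pi \<alpha> \<sigma> f"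
  show "S f z = pi_integral \<alpha> (of_real \<sigma> + of_real \<alpha> * z) f" by (rule main_eval[OF a s SB f])
  define q where "q = (of_real \<sigma> + of_real \<alpha> * z) / (of_real \<alpha>)\<^sup>2"
  have sm: "summable (\<lambda>n. f n * q ^ n / of_nat (fact n))"
    by (rule summable_norm_cancel, rule part_sumQ[OF a s f order.refl])
  have "pi_integral \<alpha> (of_real \<sigma> + of_real \<alpha> * z) f = (\<Sum>n. exp (- (of_real \<sigma> + of_real \<alpha> * z) / (of_real \<alpha>)\<^sup>2) * (f n * q ^ n / of_nat (fact n)))"
    unfolding pi_integral_def pi_weight_def q_def by (simp add: mult_ac)
  also have "\<dots> = exp (- (of_real \<sigma> + of_real \<alpha> * z) / (of_real \<alpha>)\<^sup>2) * (\<Sum>n. f n * q ^ n / of_nat (fact n))"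
    by (rule suminf_mult[OF sm])
  finally show "pi_integral \<alpha> (of_real \<sigma> + of_real \<alpha> * z) f =
              exp (- (of_real \<sigma> + of_real \<alpha> * z) / (of_real \<alpha>)\<^sup>2) *
              (\<Sum>n. f n * ((of_real \<sigma> + of_real \<alpha> * z) / (of_real \<alpha>)\<^sup>2) ^ n / of_nat (fact n))"
    unfolding q_def .
next
  note a = assms(1) and s = assms(2)
  fix x :: real and n assume x: "x > - \<sigma> / \<alpha>"
  then have w: "\<sigma> + \<alpha> * x > 0" using a by (simp add: field_simps)
  show "pi_weight \<alpha> (of_real (\<sigma> + \<alpha> * x)) n \<in> \<real>" unfolding pw_real by (rule Reals_of_real)
  show "Re (pi_weight \<alpha> (of_real (\<sigma> + \<alpha> * x)) n) \<ge> 0" unfolding pw_real Re_complex_of_real using w by simp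
next
  note a = assms(1) and s = assms(2)
  fix x :: real assume x: "x > - \<sigma> / \<alpha>"
  define c where "c = (\<sigma> + \<alpha> * x) / \<alpha>\<^sup>2"
  have "(\<lambda>n. c ^ n / fact n) sums exp c" using exp_converges[of c] by (simp add: divide_inverse mult.commute scaleR_conv_of_real)
  then have "(\<lambda>n. exp (- c) * (c ^ n / fact n)) sums (exp (- c) * exp c)" by (rule sums_mult)
  then have "(\<lambda>n. exp (- c) * c ^ n / fact n) sums 1" by (simp add: exp_minus field_simps)
  then have "(\<lambda>n. complex_of_real (exp (- c) * c ^ n / fact n)) sums of_real 1" by (rule sums_of_real)
  then have "(\<lambda>n. pi_weight \<alpha> (of_real (\<sigma> + \<alpha> * x)) n) sums 1" unfolding pw_real c_def minus_divide_left of_real_1 .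
  then show "(\<Sum>n. pi_weight \<alpha> (of_real (\<sigma> + \<alpha> * x)) n) = 1" by (simp add: sums_iff)
next
  note a = assms(1) and s = assms(2)
  fix f z assume f: "L2pi \<alpha> \<sigma> f"
  show "summable (\<lambda>n. norm (f n * ((of_real \<sigma> + of_real \<alpha> * z) / (of_real \<alpha>)\<^sup>2) ^ n / of_nat (fact n)))"
    by (rule part_sumQ[OF a s f order.refl])
next
  note a = assms(1) and s = assms(2)
  fix f and K :: "complex set" assume f: "L2pi \<alpha> \<sigma> f" and K: "compact K"
  obtain B where B: "\<And>z. z \<in> K \<Longrightarrow> norm z \<le> B" using compact_imp_bounded[OF K] by (auto simp: bounded_iff)
  define Q where "Q = (\<sigma> + \<alpha> * \<bar>B\<bar>) / \<alpha>\<^sup>2"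
  have qz: "norm ((of_real \<sigma> + of_real \<alpha> * z) / (of_real \<alpha>)\<^sup>2) \<le> Q" if "z \<in> K" for z
    unfolding Q_def by (rule q_bound[OF a s]) (use B[OF that] in linarith)
  have M: "summable (\<lambda>n. norm (f n) * Q ^ n / fact n)" 
    by (rule L2_sumQ[OF a s f]) (use a s in \<open>simp add: Q_def\<close>)
  have bnd: "norm (f n * ((of_real \<sigma> + of_real \<alpha> * z) / (of_real \<alpha>)\<^sup>2) ^ n / of_nat (fact n)) \<le> norm (f n) * Q ^ n / fact n"
    if "z \<in> K" for n z
  proof -
    have "norm (f n) * norm ((of_real \<sigma> + of_real \<alpha> * z) / (of_real \<alpha>)\<^sup>2) ^ n / fact n \<le> norm (f n) * Q ^ n / fact n"
      by (intro divide_right_mono mult_left_mono power_mono qz that) simp_all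
    then show ?thesis by (simp add: norm_mult norm_divide norm_power)
  qed
  show "uniformly_convergent_on K (\<lambda>N z. \<Sum>n<N. f n * ((of_real \<sigma> + of_real \<alpha> * z) / (of_real \<alpha>)\<^sup>2) ^ n / of_nat (fact n))"
    by (rule Weierstrass_m_test'[OF bnd M])
  show "uniformly_convergent_on K (\<lambda>N z. \<Sum>n<N. norm (f n * ((of_real \<sigma> + of_real \<alpha> * z) / (of_real \<alpha>)\<^sup>2) ^ n / of_nat (fact n)))"
    by (rule Weierstrass_m_test'[OF _ M]) (simp only: norm_ge_zero real_norm_def abs_of_nonneg bnd)
qed

end
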